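(* Let $\mathbf{Q}(t)=(Q_1(t),\ldots,Q_K(t))$, $t\in\{0,1,2,\ldots\}$, be a stochastic vector process with real-valued components and $p(t)$ a real-valued stochastic process on the same probability space. Let $\mathcal{H}(0)=\{\mathbf{Q}(0)\}$ and, for $t>0$, $\mathcal{H}(t)=\{\mathbf{Q}(0),\ldots,\mathbf{Q}(t),p(0),\ldots,p(t-1)\}$. Let $L(\mathbf{Q})=\frac{1}{2}\sum_{k=1}^K w_kQ_k^2$ with constants $w_k>0$, and $\Delta(\mathcal{H}(t))=\mathbb{E}[L(\mathbf{Q}(t+1))-L(\mathbf{Q}(t))\mid \mathcal{H}(t)]$. Suppose: (i) $\mathbb{E}[p(t)^2]<\infty$ for all $t$ and $\sum_{\tau=1}^\infty \mathbb{E}[p(\tau)^2]/\tau^2<\infty$; (ii) there is a finite constant $D>0$ with $\mathbb{E}[(Q_k(t+1)-Q_k(t))^4\mid\mathbf{Q}(t)]\leq D$ for all $t$, all possible $\mathbf{Q}(t)$ and all $k$; (iii) $\mathbb{E}[Q_k(t)^2]$ is finite for all $k,t$ and $\sum_{t=1}^\infty \mathbb{E}[Q_k(t)^2]/t^2<\infty$ for all $k\in\{1,\ldots,K\}$; (iv) there are constants $B$, $p^*$, $V\geq 0$, $\epsilon\geq 0$ such that for all $t$ and all possible $\mathcal{H}(t)$, $$\Delta(\mathcal{H}(t))+V\,\mathbb{E}[p(t)\mid\mathcal{H}(t)]\leq B+Vp^*-\epsilon\sum_{k=1}^K|Q_k(t)|.$$ Then: (a) If $V>0$, then $\limsup_{t\to\infty}\frac{1}{t}\sum_{\tau=0}^{t-1}p(\tau)\leq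 p^*+\frac{B}{V}$ with probability 1. (b) If $\epsilon>0$, then with probability 1, $$\limsup_{t\to\infty}\frac{1}{t}\sum_{\tau=0}^{t-1}\sum_{k=1}^K|Q_k(\tau)|\leq\frac{B}{\epsilon}+\frac{V}{\epsilon}\limsup_{t\to\infty}\frac{1}{t}\sum_{\tau=0}^{t-1}[p^*-p(\tau)].$$
   Context: Time is slotted. "For all possible $\mathcal{H}(t)$" (resp. $\mathbf{Q}(t)$) means for every realization (almost surely). *)

theory Defs
  imports "HOL-Probability.Probability"
begin

definition gen_sigma :: "'a measure \<Rightarrow> ('a \<Rightarrow> real) set \<Rightarrow> 'a measure" where
  "gen_sigma M Xs = sigma (space M) {X -` A \<inter> space M | X A. X \<in> Xs \<and> A \<in> sets borel}"

definition hist :: "'a measure \<Rightarrow> nat \<Rightarrow> (nat \<Rightarrow> nat \<Rightarrow> 'a \<Rightarrow> real) \<Rightarrow> (nat \<Rightarrow> 'a \<Rightarrow> real) \<Rightarrow> nat \<Rightarrow> 'a measure" where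
  "hist M K Q p t = gen_sigma M ({Q \<tau> k | \<tau> k. \<tau> \<le> t \<and> k \<in> {1..K}} \<union> {p \<tau> | \<tau>. \<tau> < t})"

definition qsig :: "'a measure \<Rightarrow> nat \<Rightarrow> (nat \<Rightarrow> nat \<Rightarrow> 'a \<Rightarrow> real) \<Rightarrow> nat \<Rightarrow> 'a measure" where
  "qsig M K Q t = gen_sigma M {Q t k | k. k \<in> {1..K}}"

definition lyap :: "nat \<Rightarrow> (nat \<Rightarrow> real) \<Rightarrow> (nat \<Rightarrow> real) \<Rightarrow> real" where
  "lyap K w q = (1/2) * (\<Sum>k=1..K. w k * (q k)^2)"

end

theory Submission
  imports Defs
begin


definition filt :: "'a measure \<Rightarrow> (nat \<Rightarrow> 'a measure) \<Rightarrow> bool" where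
  "filt M F \<longleftrightarrow> (\<forall>n. subalgebra M (F n)) \<and> (\<forall>n m. n \<le> m \<longrightarrow> sets (F n) \<subseteq> sets (F m))"

definition mdiff :: "'a measure \<Rightarrow> (nat \<Rightarrow> 'a measure) \<Rightarrow> (nat \<Rightarrow> 'a \<Rightarrow> real) \<Rightarrow> bool" where
  "mdiff M F D \<longleftrightarrow> (\<forall>n. D n \<in> borel_measurable (F (Suc n)) \<and> integrable M (\<lambda>x. (D n x)^2)
      \<and> (AE x in M. real_cond_exp M (F n) (D n) x = 0))"

lemma filt_shift: "filt M F \<Longrightarrow> filt M (\<lambda>k. F (m + k))"
  unfolding filt_def by auto

lemma mdiff_shift: "mdiff M F D \<Longrightarrow> mdiff M (\<lambda>k. F (m + k)) (\<lambda>k. D (m + k))"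
  unfolding mdiff_def by (metis add_Suc_right)

lemma meas_mono:
  assumes "filt M F" "n \<le> m" "f \<in> borel_measurable (F n)"
  shows "f \<in> borel_measurable (F m)"
proof -
  have "space (F n) = space (F m)" using assms(1) unfolding filt_def subalgebra_def by auto
  moreover have "sets (F n) \<subseteq> sets (F m)" using assms(1,2) unfolding filt_def by auto
  ultimately show ?thesis using assms(3) unfolding measurable_def by auto
qed

lemma meas_M:
  assumes "filt M F" "f \<in> borel_measurable (F n)"
  shows "f \<in> borel_measurable M"
  using assms measurable_from_subalg unfolding filt_def by blast

lemma sfs:
  assumes "prob_space M" "filt M F"
  shows "sigma_finite_subalgebra M (F n)"
proof -
  interpret prob_space M by fact
  have "finite_measure_subalgebra M (F n)"
    using assms(2) unfolding filt_def by unfold_locales auto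
  then show ?thesis by (rule finite_measure_subalgebra_is_sigma_finite)
qed

lemma integrable_prod_sq:
  fixes f g :: "'a \<Rightarrow> real"
  assumes "integrable M (\<lambda>x. (f x)^2)" "integrable M (\<lambda>x. (g x)^2)"
    "f \<in> borel_measurable M" "g \<in> borel_measurable M"
  shows "integrable M (\<lambda>x. f x * g x)"
proof (rule Bochner_Integration.integrable_bound)
  show "integrable M (\<lambda>x. (f x)^2 + (g x)^2)" using assms by auto
  show "(\<lambda>x. f x * g x) \<in> borel_measurable M" using assms by auto
  show "AE x in M. norm (f x * g x) \<le> norm ((f x)^2 + (g x)^2)"
  proof (rule AE_I2)
    fix x
    have "0 \<le> (\<bar>f x\<bar> - \<bar>g x\<bar>)^2" by simp
    then have "2 * \<bar>f x * g x\<bar> \<le> (f x)^2 + (g x)^2"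
      by (simp add: power2_eq_square abs_mult algebra_simps)
    then show "norm (f x * g x) \<le> norm ((f x)^2 + (g x)^2)" by simp
  qed
qed

lemma orth:
  assumes "prob_space M" "filt M F"
    and g: "g \<in> borel_measurable (F n)" and d: "d \<in> borel_measurable M"
    and i: "integrable M (\<lambda>x. g x * d x)"
    and z: "AE x in M. real_cond_exp M (F n) d x = 0"
  shows "(\<integral>x. g x * d x \<partial>M) = 0"
proof -
  interpret sigma_finite_subalgebra M "F n" using sfs assms by blast
  have "(\<integral>x. g x * d x \<partial>M) = (\<integral>x. g x * real_cond_exp M (F n) d x \<partial>M)"
    using real_cond_exp_intg(2)[OF i g d] by simp
  also have "\<dots> = (\<integral>x. 0 \<partial>M)"
  proof (rule integral_cong_AE)
    show "(\<lambda>x. g x * real_cond_exp M (F n) d x) \<in> borel_measurable M"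
      using measurable_from_subalg[OF subalg g] by measurable
    show "AE x in M. g x * real_cond_exp M (F n) d x = 0"
      using z by (rule AE_mp) simp
  qed simp
  finally show ?thesis by simp
qed

lemma mdiff_meas:
  assumes "filt M F" "mdiff M F D"
  shows "D k \<in> borel_measurable M" "k < j \<Longrightarrow> D k \<in> borel_measurable (F j)"
    "integrable M (\<lambda>x. (D k x)^2)"
proof -
  have "D k \<in> borel_measurable (F (Suc k))" using assms(2) unfolding mdiff_def by auto
  then show "D k \<in> borel_measurable M" "k < j \<Longrightarrow> D k \<in> borel_measurable (F j)"
    using meas_M[OF assms(1)] meas_mono[OF assms(1), of "Suc k" j] by auto
  show "integrable M (\<lambda>x. (D k x)^2)" using assms(2) unfolding mdiff_def by auto
qed

lemma sq_sum_int:
  fixes D :: "nat \<Rightarrow> 'a \<Rightarrow> real"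
  assumes "finite A" "\<And>k. k \<in> A \<Longrightarrow> integrable M (\<lambda>x. (D k x)^2)"
    "\<And>k. k \<in> A \<Longrightarrow> D k \<in> borel_measurable M"
  shows "integrable M (\<lambda>x. (\<Sum>k\<in>A. D k x)^2)"
proof -
  have eq: "(\<lambda>x. (\<Sum>k\<in>A. D k x)^2) = (\<lambda>x. \<Sum>i\<in>A. \<Sum>k\<in>A. D i x * D k x)"
    by (simp add: power2_eq_square sum_product)
  show ?thesis unfolding eq
  proof (rule Bochner_Integration.integrable_sum)
    fix i assume "i \<in> A"
    show "integrable M (\<lambda>x. \<Sum>k\<in>A. D i x * D k x)"
    proof (rule Bochner_Integration.integrable_sum)
      fix k assume "k \<in> A"
      show "integrable M (\<lambda>x. D i x * D k x)"
        by (rule integrable_prod_sq) (auto simp: assms \<open>i \<in> A\<close> \<open>k \<in> A\<close>)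
    qed
  qed
qed

lemma S_meas:
  assumes "filt M F" "mdiff M F D" "j \<le> n"
  shows "(\<lambda>x. \<Sum>k<j. D k x) \<in> borel_measurable (F n)"
  using mdiff_meas(2)[OF assms(1,2)] assms(3) by (intro borel_measurable_sum) auto

lemma S_int:
  assumes "filt M F" "mdiff M F D" "finite A"
  shows "integrable M (\<lambda>x. (\<Sum>k\<in>A. D k x)^2)"
  using assms(3) by (rule sq_sum_int) (use mdiff_meas[OF assms(1,2)] in auto)

lemma S_sq:
  assumes "prob_space M" "filt M F" "mdiff M F D"
  shows "(\<integral>x. (\<Sum>k<n. D k x)^2 \<partial>M) = (\<Sum>k<n. \<integral>x. (D k x)^2 \<partial>M)"
proof (induction n)
  case 0
  then show ?case by simp
next
  case (Suc n)
  define S where "S = (\<lambda>x. \<Sum>k<n. D k x)"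
  have Sm: "S \<in> borel_measurable (F n)" unfolding S_def by (rule S_meas[OF assms(2,3)]) simp
  have SM: "S \<in> borel_measurable M" using meas_M[OF assms(2) Sm] .
  have Si: "integrable M (\<lambda>x. (S x)^2)" unfolding S_def by (rule S_int[OF assms(2,3)]) simp_all
  note Dm = mdiff_meas[OF assms(2,3)]
  have SDi: "integrable M (\<lambda>x. S x * D n x)"
    by (rule integrable_prod_sq[OF Si Dm(3) SM Dm(1)])
  have z: "AE x in M. real_cond_exp M (F n) (D n) x = 0" using assms(3) unfolding mdiff_def by auto
  have o: "(\<integral>x. S x * D n x \<partial>M) = 0"
    by (rule orth[OF assms(1,2) Sm Dm(1) SDi z])
  have eq: "(\<lambda>x. (\<Sum>k<Suc n. D k x)^2) = (\<lambda>x. (S x)^2 + 2 * (S x * D n x) + (D n x)^2)"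
    unfolding S_def by (auto simp: power2_eq_square algebra_simps)
  have "(\<integral>x. (\<Sum>k<Suc n. D k x)^2 \<partial>M) = (\<integral>x. (S x)^2 \<partial>M) + 2 * (\<integral>x. S x * D n x \<partial>M) + (\<integral>x. (D n x)^2 \<partial>M)"
    unfolding eq using Si SDi Dm(3) by simp
  then show ?case using Suc o unfolding S_def by simp
qed

lemma E1:
  assumes "prob_space M" "filt M F" "mdiff M F D" "j \<le> n" "A \<in> sets (F j)"
  shows "(\<integral>x. indicator A x * (\<Sum>k<j. D k x)^2 \<partial>M) \<le> (\<integral>x. indicator A x * (\<Sum>k<n. D k x)^2 \<partial>M)"
proof -
  define S where "S = (\<lambda>x. \<Sum>k<j. D k x)"
  define R where "R = (\<lambda>x. \<Sum>k\<in>{j..<n}. D k x)"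
  note Dm = mdiff_meas[OF assms(2,3)]
  have AM: "A \<in> sets M" using assms(2,5) unfolding filt_def subalgebra_def by auto
  have Sm: "S \<in> borel_measurable (F j)" unfolding S_def by (rule S_meas[OF assms(2,3)]) simp
  have SM: "S \<in> borel_measurable M" using meas_M[OF assms(2) Sm] .
  have Si: "integrable M (\<lambda>x. (S x)^2)" unfolding S_def by (rule S_int[OF assms(2,3)]) simp_all
  have Ri: "integrable M (\<lambda>x. (R x)^2)" unfolding R_def by (rule S_int[OF assms(2,3)]) simp_all
  have RM: "R \<in> borel_measurable M" unfolding R_def using Dm(1) by measurable
  have split: "(\<Sum>k<n. D k x) = S x + R x" for x
    unfolding S_def R_def using assms(4)
    by (metis atLeast0LessThan sum.atLeastLessThan_concat zero_le)
  define g where "g = (\<lambda>x. indicator A x * S x)"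
  have gF: "g \<in> borel_measurable (F k)" if "j \<le> k" for k
  proof -
    have "A \<in> sets (F k)" using assms(2,5) that unfolding filt_def by auto
    moreover have "S \<in> borel_measurable (F k)" using meas_mono[OF assms(2) that Sm] .
    ultimately show ?thesis unfolding g_def by measurable
  qed
  have gM: "g \<in> borel_measurable M" using meas_M[OF assms(2) gF[OF order_refl]] .
  have gi: "integrable M (\<lambda>x. (g x)^2)"
  proof -
    have "(\<lambda>x. (g x)^2) = (\<lambda>x. indicator A x * (S x)^2)"
      unfolding g_def by (auto simp: indicator_def)
    then show ?thesis using integrable_mult_indicator[OF AM Si] by simp
  qed
  have gDi: "integrable M (\<lambda>x. g x * D k x)" for k
    by (rule integrable_prod_sq[OF gi Dm(3) gM Dm(1)])
  have cross: "(\<integral>x. g x * R x \<partial>M) = 0"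
  proof -
    have "(\<integral>x. g x * R x \<partial>M) = (\<integral>x. (\<Sum>k\<in>{j..<n}. g x * D k x) \<partial>M)"
      unfolding R_def by (simp add: sum_distrib_left)
    also have "\<dots> = (\<Sum>k\<in>{j..<n}. (\<integral>x. g x * D k x \<partial>M))"
      by (rule Bochner_Integration.integral_sum[where f="\<lambda>k x. g x * D k x"]) (use gDi in auto)
    also have "\<dots> = (\<Sum>k\<in>{j..<n}. 0)"
    proof (rule sum.cong)
      fix k assume "k \<in> {j..<n}"
      then have "j \<le> k" by auto
      have z: "AE x in M. real_cond_exp M (F k) (D k) x = 0" using assms(3) unfolding mdiff_def by auto
      show "(\<integral>x. g x * D k x \<partial>M) = 0"
        by (rule orth[OF assms(1,2) gF[OF \<open>j \<le> k\<close>] Dm(1) gDi z])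
    qed simp
    finally show ?thesis by simp
  qed
  have gRi: "integrable M (\<lambda>x. g x * R x)" by (rule integrable_prod_sq[OF gi Ri gM RM])
  have ARi: "integrable M (\<lambda>x. indicator A x * (R x)^2)" using integrable_mult_indicator[OF AM Ri] by simp
  have ASi: "integrable M (\<lambda>x. indicator A x * (S x)^2)" using integrable_mult_indicator[OF AM Si] by simp
  have eq: "(\<lambda>x. indicator A x * (\<Sum>k<n. D k x)^2) =
      (\<lambda>x. indicator A x * (S x)^2 + 2 * (g x * R x) + indicator A x * (R x)^2)"
    unfolding split g_def by (auto simp: indicator_def power2_eq_square algebra_simps)
  have "(\<integral>x. indicator A x * (\<Sum>k<n. D k x)^2 \<partial>M) =
      (\<integral>x. indicator A x * (S x)^2 \<partial>M) + 2 * (\<integral>x. g x * R x \<partial>M) + (\<integral>x. indicator A x * (R x)^2 \<partial>M)"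
    unfolding eq using ASi gRi ARi by simp
  moreover have "(\<integral>x. indicator A x * (R x)^2 \<partial>M) \<ge> 0"
    by (rule integral_nonneg_AE) (auto simp: indicator_def)
  ultimately show ?thesis using cross unfolding S_def by simp
qed

lemma kolmogorov:
  assumes "prob_space M" "filt M F" "mdiff M F D" "lam > 0"
  shows "lam^2 * measure M (\<Union>j\<le>n. {x\<in>space M. lam \<le> \<bar>\<Sum>k<j. D k x\<bar>})
      \<le> (\<Sum>k<n. \<integral>x. (D k x)^2 \<partial>M)"
proof -
  interpret prob_space M by fact
  define S where "S = (\<lambda>j x. \<Sum>k<j. D k x)"
  define E where "E = (\<Union>j\<le>n. {x\<in>space M. lam \<le> \<bar>S j x\<bar>})"
  define A where "A = (\<lambda>j. {x\<in>space M. lam \<le> \<bar>S j x\<bar>} \<inter> (\<Inter>i\<in>{..<j}. {x\<in>space M. \<bar>S i x\<bar> < lam}))"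
  have SF: "S i \<in> borel_measurable (F j)" if "i \<le> j" for i j
    unfolding S_def by (rule S_meas[OF assms(2,3) that])
  have SM: "S i \<in> borel_measurable M" for i using meas_M[OF assms(2) SF[OF order_refl]] .
  have spF: "space (F j) = space M" for j using assms(2) unfolding filt_def subalgebra_def by auto
  have AF: "A j \<in> sets (F j)" for j
  proof -
    have [measurable]: "S j \<in> borel_measurable (F j)" using SF by simp
    have 1: "{x\<in>space M. lam \<le> \<bar>S j x\<bar>} \<in> sets (F j)"
      unfolding spF[of j, symmetric] by measurable
    have 2: "{x\<in>space M. \<bar>S i x\<bar> < lam} \<in> sets (F j)" if "i < j" for i
    proof -
      have [measurable]: "S i \<in> borel_measurable (F j)" using SF that by simp
      show ?thesis unfolding spF[of j, symmetric] by measurable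
    qed
    have 3: "space M \<in> sets (F j)" using sets.top[of "F j"] spF[of j] by metis
    show ?thesis
    proof (cases "j = 0")
      case True
      then show ?thesis unfolding A_def using 1 by simp
    next
      case False
      then show ?thesis unfolding A_def using 1 2 3 by (intro sets.Int sets.finite_INT) auto
    qed
  qed
  have AM: "A j \<in> sets M" for j using AF[of j] assms(2) unfolding filt_def subalgebra_def by auto
  have EM: "E \<in> sets M" unfolding E_def using SM by measurable
  have Si: "integrable M (\<lambda>x. (S j x)^2)" for j unfolding S_def by (rule S_int[OF assms(2,3)]) simp
  have ASi: "integrable M (\<lambda>x. indicator (A j) x * (S i x)^2)" for i j
    using integrable_mult_indicator[OF AM Si] by simp
  have p1: "lam^2 * indicator E x \<le> (\<Sum>j\<le>n. indicator (A j) x * (S j x)^2)" if "x \<in> space M" for x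
  proof (cases "x \<in> E")
    case False
    then show ?thesis by (auto intro!: sum_nonneg)
  next
    case True
    then obtain j where j: "j \<le> n" "lam \<le> \<bar>S j x\<bar>" unfolding E_def by auto
    define j0 where "j0 = (LEAST j. lam \<le> \<bar>S j x\<bar>)"
    have j0: "lam \<le> \<bar>S j0 x\<bar>" unfolding j0_def by (rule LeastI[of _ j]) (use j in auto)
    have j0n: "j0 \<le> n" unfolding j0_def using j Least_le[of "\<lambda>j. lam \<le> \<bar>S j x\<bar>" j] by auto
    have lt: "\<bar>S i x\<bar> < lam" if "i < j0" for i
      using not_less_Least[of i "\<lambda>j. lam \<le> \<bar>S j x\<bar>"] that unfolding j0_def by auto
    have xA: "x \<in> A j0" unfolding A_def using that j0 lt by auto
    have "lam^2 \<le> (S j0 x)^2"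
    proof -
      have "lam^2 \<le> \<bar>S j0 x\<bar>^2" by (rule power_mono) (use j0 assms(4) in auto)
      then show ?thesis by simp
    qed
    then have "lam^2 * indicator E x \<le> indicator (A j0) x * (S j0 x)^2" using xA True by simp
    also have "\<dots> \<le> (\<Sum>j\<le>n. indicator (A j) x * (S j x)^2)"
      by (rule member_le_sum) (use j0n in auto)
    finally show ?thesis .
  qed
  have p2: "(\<Sum>j\<le>n. indicator (A j) x :: real) \<le> 1" for x
  proof (cases "\<exists>j. x \<in> A j")
    case False
    then show ?thesis by simp
  next
    case True
    then obtain j0 where j0: "x \<in> A j0" by auto
    have "x \<notin> A j" if "j \<noteq> j0" for j
    proof
      assume xj: "x \<in> A j"
      show False
      proof (cases "j < j0")
        case True
        have "\<bar>S j x\<bar> < lam" using j0 True unfolding A_def by blast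
        then show False using xj unfolding A_def by auto
      next
        case False
        then have "j0 < j" using that by auto
        have "\<bar>S j0 x\<bar> < lam" using xj \<open>j0 < j\<close> unfolding A_def by blast
        then show False using j0 unfolding A_def by auto
      qed
    qed
    then have "(\<Sum>j\<le>n. indicator (A j) x :: real) = (\<Sum>j\<le>n. if j = j0 then indicator (A j0) x else 0)"
      by (intro sum.cong) auto
    also have "\<dots> \<le> 1" by (simp add: sum.delta indicator_def)
    finally show ?thesis .
  qed
  have "lam^2 * measure M E = (\<integral>x. lam^2 * indicator E x \<partial>M)"
    using EM by simp
  also have "\<dots> \<le> (\<integral>x. (\<Sum>j\<le>n. indicator (A j) x * (S j x)^2) \<partial>M)"
  proof (rule integral_mono)
    show "integrable M (\<lambda>x. lam^2 * indicator E x)"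
      using EM by (intro Bochner_Integration.integrable_mult_right integrable_real_indicator) (auto simp: less_top[symmetric])
    show "integrable M (\<lambda>x. \<Sum>j\<le>n. indicator (A j) x * (S j x)^2)"
      using ASi by (intro Bochner_Integration.integrable_sum) auto
  qed (rule p1)
  also have "\<dots> = (\<Sum>j\<le>n. \<integral>x. indicator (A j) x * (S j x)^2 \<partial>M)"
    by (rule Bochner_Integration.integral_sum[where f="\<lambda>j x. indicator (A j) x * (S j x)^2"]) (use ASi in auto)
  also have "\<dots> \<le> (\<Sum>j\<le>n. \<integral>x. indicator (A j) x * (S n x)^2 \<partial>M)"
    by (rule sum_mono) (unfold S_def, rule E1[OF assms(1,2,3) _ AF], auto)
  also have "\<dots> = (\<integral>x. (\<Sum>j\<le>n. indicator (A j) x) * (S n x)^2 \<partial>M)"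
    unfolding sum_distrib_right
    by (rule Bochner_Integration.integral_sum[where f="\<lambda>j x. indicator (A j) x * (S n x)^2", symmetric]) (use ASi in auto)
  also have "\<dots> \<le> (\<integral>x. (S n x)^2 \<partial>M)"
  proof (rule integral_mono)
    show "integrable M (\<lambda>x. (\<Sum>j\<le>n. indicator (A j) x) * (S n x)^2)"
      unfolding sum_distrib_right using ASi by (intro Bochner_Integration.integrable_sum) auto
    show "integrable M (\<lambda>x. (S n x)^2)" by (rule Si)
    fix x
    have "(\<Sum>j\<le>n. indicator (A j) x) * (S n x)^2 \<le> 1 * (S n x)^2"
      by (rule mult_right_mono[OF p2]) simp
    then show "(\<Sum>j\<le>n. indicator (A j) x) * (S n x)^2 \<le> (S n x)^2" by simp
  qed
  also have "\<dots> = (\<Sum>k<n. \<integral>x. (D k x)^2 \<partial>M)" unfolding S_def by (rule S_sq[OF assms(1,2,3)])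
  finally show ?thesis unfolding E_def S_def .
qed

lemma sum_shift_ivl: fixes f :: "nat \<Rightarrow> 'b::comm_monoid_add" and N j :: nat
  shows "sum f {N..<N+j} = (\<Sum>k<j. f (N + k))"
  by (induction j) (auto simp: add.commute)

lemma mart_conv:
  assumes "prob_space M" "filt M F" "mdiff M F D"
    and sm: "summable (\<lambda>k. \<integral>x. (D k x)^2 \<partial>M)"
  shows "AE x in M. summable (\<lambda>k. D k x)"
proof -
  interpret prob_space M by fact
  define v where "v = (\<lambda>k. \<integral>x. (D k x)^2 \<partial>M)"
  have v0: "v k \<ge> 0" for k unfolding v_def by simp
  have smv: "summable v" using sm unfolding v_def .
  define tl where "tl = (\<lambda>N. \<Sum>k. v (k + N))"
  have tl0: "tl \<longlonglongrightarrow> 0" unfolding tl_def by (rule suminf_exist_split2[OF smv])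
  define H where "H = (\<lambda>N c n. \<Union>j\<le>n. {x\<in>space M. c \<le> \<bar>\<Sum>k<j. D (N + k) x\<bar>})"
  define G where "G = (\<lambda>N c. \<Union>n. H N c n)"
  note Dm = mdiff_meas[OF assms(2,3)]
  have HM: "H N c n \<in> sets M" for N c n unfolding H_def using Dm(1) by measurable
  have GM: "G N c \<in> sets M" for N c unfolding G_def using HM by auto
  have Gb: "measure M (G N c) \<le> tl N / c^2" if "c > 0" for N c
  proof -
    have Hb: "measure M (H N c n) \<le> tl N / c^2" for n
    proof -
      have "c^2 * measure M (H N c n) \<le> (\<Sum>k<n. \<integral>x. (D (N + k) x)^2 \<partial>M)"
        unfolding H_def
        by (rule kolmogorov[OF assms(1) filt_shift[OF assms(2)] mdiff_shift[OF assms(3)] that])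
      also have "\<dots> = (\<Sum>k<n. v (k + N))" unfolding v_def by (simp add: add.commute)
      also have "\<dots> \<le> tl N" unfolding tl_def
        by (rule sum_le_suminf) (use summable_ignore_initial_segment[OF smv] v0 in auto)
      finally show ?thesis using that by (simp add: field_simps)
    qed
    have inc: "incseq (H N c)" by (rule incseq_SucI) (auto simp: H_def atMost_Suc)
    have "(\<lambda>n. measure M (H N c n)) \<longlonglongrightarrow> measure M (\<Union>n. H N c n)"
      by (rule finite_Lim_measure_incseq) (use HM inc in auto)
    then show ?thesis unfolding G_def by (rule LIMSEQ_le_const2) (use Hb in auto)
  qed
  define Bad where "Bad = (\<lambda>c. \<Inter>N. G N c)"
  have BadM: "Bad c \<in> sets M" for c unfolding Bad_def using GM by auto
  have Bad0: "measure M (Bad c) = 0" if "c > 0" for c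
  proof -
    have "measure M (Bad c) \<le> tl N / c^2" for N
    proof -
      have "measure M (Bad c) \<le> measure M (G N c)"
        by (rule finite_measure_mono) (auto simp: Bad_def GM)
      then show ?thesis using Gb[OF that, of N] by simp
    qed
    moreover have "(\<lambda>N. tl N / c^2) \<longlonglongrightarrow> 0 / c^2" by (intro tendsto_divide tl0) (use that in auto)
    ultimately have "measure M (Bad c) \<le> 0"
      by (intro LIMSEQ_le_const[where X="\<lambda>N. tl N / c^2"]) auto
    then show ?thesis by (simp add: measure_le_0_iff)
  qed
  have AEr: "AE x in M. \<forall>r::nat. x \<notin> Bad (inverse (real (Suc r)))"
  proof (subst AE_all_countable, intro allI)
    fix r :: nat
    have "Bad (inverse (real (Suc r))) \<in> null_sets M"
      using Bad0[of "inverse (real (Suc r))"] BadM by (auto simp: emeasure_eq_measure)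
    then show "AE x in M. x \<notin> Bad (inverse (real (Suc r)))" by (rule AE_not_in)
  qed
  show ?thesis
    using AEr AE_space
  proof (rule AE_mp[OF AE_conjI])
    show "AE x in M. (\<forall>r. x \<notin> Bad (inverse (real (Suc r)))) \<and> x \<in> space M \<longrightarrow> summable (\<lambda>k. D k x)"
    proof (rule AE_I2, intro impI)
      fix x assume "(\<forall>r. x \<notin> Bad (inverse (real (Suc r)))) \<and> x \<in> space M"
      then have nb: "\<And>r. x \<notin> Bad (inverse (real (Suc r)))" and xs: "x \<in> space M" by auto
      show "summable (\<lambda>k. D k x)"
        unfolding summable_Cauchy
      proof (intro allI impI)
        fix e :: real assume "e > 0"
        then obtain n :: nat where n: "n > 0" "inverse (real n) < e / 2"
          using ex_inverse_of_nat_less[of "e/2"] by auto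
        define r where "r = n - 1"
        have nr: "real (Suc r) = real n" using n unfolding r_def by auto
        define c where "c = inverse (real (Suc r))"
        have c: "c < e / 2" "c > 0" unfolding c_def using n nr by auto
        obtain N where "x \<notin> G N c" using nb[of r] unfolding Bad_def c_def by auto
        have lt: "\<bar>\<Sum>k<j. D (N + k) x\<bar> < c" for j
        proof (rule ccontr)
          assume "\<not> \<bar>\<Sum>k<j. D (N + k) x\<bar> < c"
          then have "c \<le> \<bar>\<Sum>k<j. D (N + k) x\<bar>" by simp
          then have "x \<in> H N c j" using xs unfolding H_def by blast
          then show False using \<open>x \<notin> G N c\<close> unfolding G_def by auto
        qed
        have lt2: "\<bar>sum (\<lambda>k. D k x) {N..<m}\<bar> < c" if "N \<le> m" for m
        proof -
          have "{N..<m} = {N..<N + (m - N)}" using that by auto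
          then show ?thesis using lt[of "m - N"] by (simp add: sum_shift_ivl)
        qed
        show "\<exists>N. \<forall>m\<ge>N. \<forall>n. norm (sum (\<lambda>k. D k x) {m..<n}) < e"
        proof (intro exI allI impI)
          fix m n assume "N \<le> m"
          show "norm (sum (\<lambda>k. D k x) {m..<n}) < e"
          proof (cases "n \<le> m")
            case True
            then show ?thesis using \<open>e > 0\<close> by simp
          next
            case False
            then have "sum (\<lambda>k. D k x) {N..<n} = sum (\<lambda>k. D k x) {N..<m} + sum (\<lambda>k. D k x) {m..<n}"
              using \<open>N \<le> m\<close> by (simp add: sum.atLeastLessThan_concat)
            then have "sum (\<lambda>k. D k x) {m..<n} = sum (\<lambda>k. D k x) {N..<n} - sum (\<lambda>k. D k x) {N..<m}" by simp
            moreover have "\<bar>sum (\<lambda>k. D k x) {N..<n}\<bar> < c" using lt2 False \<open>N \<le> m\<close> by simp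
            moreover have "\<bar>sum (\<lambda>k. D k x) {N..<m}\<bar> < c" using lt2 \<open>N \<le> m\<close> by simp
            ultimately show ?thesis using c by simp
          qed
        qed
      qed
    qed
  qed
qed

lemma cesaro0:
  fixes t :: "nat \<Rightarrow> real"
  assumes "t \<longlonglongrightarrow> 0"
  shows "(\<lambda>n. (\<Sum>k<n. t k) / real n) \<longlonglongrightarrow> 0"
proof (rule LIMSEQ_I)
  fix e :: real assume e: "e > 0"
  obtain N where N: "\<And>k. k \<ge> N \<Longrightarrow> \<bar>t k\<bar> < e / 2"
    using LIMSEQ_D[OF assms, of "e/2"] e by auto
  define C where "C = (\<Sum>k<N. \<bar>t k\<bar>)"
  have C0: "C \<ge> 0" unfolding C_def by (simp add: sum_nonneg)
  obtain N2 :: nat where N2: "real N2 > 2 * C / e" using reals_Archimedean2 by blast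
  show "\<exists>no. \<forall>n\<ge>no. norm ((\<Sum>k<n. t k) / real n - 0) < e"
  proof (intro exI allI impI)
    fix n assume n: "max (Suc N) N2 \<le> n"
    then have nN: "N \<le> n" and npos: "real n > 0" by auto
    have "\<bar>\<Sum>k<n. t k\<bar> \<le> (\<Sum>k<n. \<bar>t k\<bar>)" by (rule sum_abs)
    also have "\<dots> = C + (\<Sum>k\<in>{N..<n}. \<bar>t k\<bar>)"
      unfolding C_def using nN by (metis atLeast0LessThan sum.atLeastLessThan_concat zero_le)
    also have "(\<Sum>k\<in>{N..<n}. \<bar>t k\<bar>) \<le> (\<Sum>k\<in>{N..<n}. e / 2)"
      by (rule sum_mono) (use N in \<open>auto simp: less_imp_le\<close>)
    also have "\<dots> = real (n - N) * (e / 2)" by simp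
    also have "\<dots> \<le> real n * (e / 2)" using e by (intro mult_right_mono) auto
    finally have b: "\<bar>\<Sum>k<n. t k\<bar> \<le> C + real n * (e / 2)" by simp
    have "C < real n * (e / 2)"
    proof -
      have "2 * C / e < real n" using N2 n by auto
      then have "2 * C < real n * e" using e by (simp add: field_simps)
      then show ?thesis by simp
    qed
    with b have "\<bar>\<Sum>k<n. t k\<bar> < real n * e" by simp
    then show "norm ((\<Sum>k<n. t k) / real n - 0) < e"
      using npos by (simp add: field_simps)
  qed
qed

lemma cesaro:
  fixes s :: "nat \<Rightarrow> real"
  assumes "s \<longlonglongrightarrow> L"
  shows "(\<lambda>n. (\<Sum>k<n. s k) / real n) \<longlonglongrightarrow> L"
proof -
  have "(\<lambda>k. s k - L) \<longlonglongrightarrow> 0" using assms by (simp add: LIM_zero)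
  then have c: "(\<lambda>n. (\<Sum>k<n. s k - L) / real n) \<longlonglongrightarrow> 0" by (rule cesaro0)
  have eq: "(\<Sum>k<n. s k) / real n = (\<Sum>k<n. s k - L) / real n + L" if "n > 0" for n
    using that by (simp add: sum_subtractf field_simps)
  have "(\<lambda>n. (\<Sum>k<n. s k - L) / real n + L) \<longlonglongrightarrow> 0 + L" by (intro tendsto_add c) simp
  then have "(\<lambda>n. (\<Sum>k<n. s k - L) / real n + L) \<longlonglongrightarrow> L" by simp
  then show ?thesis
    by (rule Lim_transform_eventually) (use eq in \<open>auto simp: eventually_sequentially intro!: exI[of _ 1]\<close>)
qed

lemma kronecker:
  fixes a :: "nat \<Rightarrow> real"
  assumes "summable (\<lambda>k. a k / real (Suc k))"
  shows "(\<lambda>n. (\<Sum>k<n. a k) / real n) \<longlonglongrightarrow> 0"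
proof -
  define s where "s = (\<lambda>n. \<Sum>k<n. a k / real (Suc k))"
  obtain L where sL: "s \<longlonglongrightarrow> L" using assms unfolding s_def
    using summable_LIMSEQ by blast
  have id: "(\<Sum>k<n. a k) = real n * s n - (\<Sum>k<n. s k)" for n
  proof (induction n)
    case 0
    then show ?case by (simp add: s_def)
  next
    case (Suc n)
    have "real (Suc n) * s (Suc n) = real (Suc n) * s n + a n"
      unfolding s_def by (simp add: field_simps)
    then show ?case using Suc by (simp add: field_simps)
  qed
  have eq: "(\<Sum>k<n. a k) / real n = s n - (\<Sum>k<n. s k) / real n" if "n > 0" for n
    using that unfolding id by (simp add: field_simps)
  have "(\<lambda>n. s n - (\<Sum>k<n. s k) / real n) \<longlonglongrightarrow> L - L"
    by (intro tendsto_diff sL cesaro)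
  then have "(\<lambda>n. s n - (\<Sum>k<n. s k) / real n) \<longlonglongrightarrow> 0" by simp
  then show ?thesis
    by (rule Lim_transform_eventually) (use eq in \<open>auto simp: eventually_sequentially intro!: exI[of _ 1]\<close>)
qed

lemma sq_int_imp_int:
  fixes f :: "'a \<Rightarrow> real"
  assumes "prob_space M" "integrable M (\<lambda>x. (f x)^2)" "f \<in> borel_measurable M"
  shows "integrable M f"
proof -
  interpret prob_space M by fact
  show ?thesis
  proof (rule Bochner_Integration.integrable_bound)
    show "integrable M (\<lambda>x. 1 + (f x)^2)" using assms(2) by auto
    show "AE x in M. norm (f x) \<le> norm (1 + (f x)^2)"
    proof (rule AE_I2)
      fix x
      have "\<bar>f x\<bar> \<le> 1 + (f x)^2"
      proof (cases "\<bar>f x\<bar> \<le> 1")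
        case True then show ?thesis by (smt (verit) zero_le_power2)
      next
        case False
        then have "\<bar>f x\<bar> * 1 \<le> \<bar>f x\<bar> * \<bar>f x\<bar>" by (intro mult_left_mono) auto
        then show ?thesis by (simp add: power2_eq_square abs_mult_self_eq)
      qed
      then show "norm (f x) \<le> norm (1 + (f x)^2)" by simp
    qed
  qed (rule assms(3))
qed

lemma slln:
  assumes "prob_space M" "filt M F"
    and meas: "\<And>n. X n \<in> borel_measurable (F (Suc n))"
    and sq: "\<And>n. integrable M (\<lambda>x. (X n x)^2)"
    and cz: "\<And>n. AE x in M. real_cond_exp M (F n) (X n) x = 0"
    and sm: "summable (\<lambda>n. (\<integral>x. (X n x)^2 \<partial>M) / (real n)^2)"
  shows "AE x in M. (\<lambda>n. (\<Sum>k<n. X k x) / real n) \<longlonglongrightarrow> 0"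
proof -
  define D where "D = (\<lambda>k x. X k x / real (Suc k))"
  have XM: "X n \<in> borel_measurable M" for n using meas_M[OF assms(2) meas] .
  have Xi: "integrable M (X n)" for n by (rule sq_int_imp_int[OF assms(1) sq XM])
  have md: "mdiff M F D"
    unfolding mdiff_def
  proof (intro allI conjI)
    fix n
    show "D n \<in> borel_measurable (F (Suc n))" unfolding D_def using meas[of n] by measurable
    have "(\<lambda>x. (D n x)^2) = (\<lambda>x. (X n x)^2 / (real (Suc n))^2)"
      unfolding D_def by (simp add: power_divide)
    then show "integrable M (\<lambda>x. (D n x)^2)" using sq[of n] by simp
    interpret sigma_finite_subalgebra M "F n" using sfs[OF assms(1,2)] .
    show "AE x in M. real_cond_exp M (F n) (D n) x = 0"
      using real_cond_exp_cdiv[OF Xi[of n], of "real (Suc n)"] cz[of n]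
      unfolding D_def by eventually_elim simp
  qed
  have smD: "summable (\<lambda>k. \<integral>x. (D k x)^2 \<partial>M)"
  proof (rule summable_comparison_test'[where N=1])
    show "summable (\<lambda>n. (\<integral>x. (X n x)^2 \<partial>M) / (real n)^2)" by (rule sm)
    fix n :: nat assume "n \<ge> 1"
    have "(\<integral>x. (D n x)^2 \<partial>M) = (\<integral>x. (X n x)^2 \<partial>M) / (real (Suc n))^2"
      unfolding D_def by (simp add: power_divide)
    moreover have "(\<integral>x. (X n x)^2 \<partial>M) \<ge> 0" by simp
    moreover have "(real n)^2 \<le> (real (Suc n))^2" by (intro power_mono) auto
    moreover have "(real n)^2 > 0" using \<open>n \<ge> 1\<close> by simp
    ultimately show "norm (\<integral>x. (D n x)^2 \<partial>M) \<le> (\<integral>x. (X n x)^2 \<partial>M) / (real n)^2"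
      by (simp add: frac_le)
  qed
  have "AE x in M. summable (\<lambda>k. D k x)" by (rule mart_conv[OF assms(1,2) md smD])
  then show ?thesis
    by eventually_elim (rule kronecker, simp add: D_def)
qed



lemma gs_Pow: "{X -` A \<inter> space M | X A. X \<in> Xs \<and> A \<in> sets borel} \<subseteq> Pow (space M)"
  by auto

lemma gs_space: "space (gen_sigma M Xs) = space M"
  unfolding gen_sigma_def by (rule space_measure_of_conv)

lemma gs_sets: "sets (gen_sigma M Xs) = sigma_sets (space M) {X -` A \<inter> space M | X A. X \<in> Xs \<and> A \<in> sets borel}"
  unfolding gen_sigma_def by (rule sets_measure_of[OF gs_Pow])

lemma gs_sub:
  assumes "\<And>X. X \<in> Xs \<Longrightarrow> X \<in> borel_measurable M"
  shows "subalgebra M (gen_sigma M Xs)"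
  unfolding subalgebra_def
proof
  show "space (gen_sigma M Xs) = space M" by (rule gs_space)
  have "{X -` A \<inter> space M | X A. X \<in> Xs \<and> A \<in> sets borel} \<subseteq> sets M"
    using assms by (auto intro: measurable_sets)
  then show "sets (gen_sigma M Xs) \<subseteq> sets M"
    unfolding gs_sets by (rule sets.sigma_sets_subset)
qed

lemma gs_mono:
  assumes "Xs \<subseteq> Ys"
  shows "sets (gen_sigma M Xs) \<subseteq> sets (gen_sigma M Ys)"
  unfolding gs_sets using assms by (intro sigma_sets_subseteq) blast

lemma gs_meas:
  assumes "X \<in> Xs"
  shows "X \<in> borel_measurable (gen_sigma M Xs)"
proof (rule measurableI)
  fix A :: "real set" assume "A \<in> sets borel"
  then have "X -` A \<inter> space M \<in> {X -` A \<inter> space M | X A. X \<in> Xs \<and> A \<in> sets borel}"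
    using assms by blast
  then show "X -` A \<inter> space (gen_sigma M Xs) \<in> sets (gen_sigma M Xs)"
    unfolding gs_sets gs_space by (rule sigma_sets.Basic)
qed simp

lemma cdiff:
  fixes f :: "'a \<Rightarrow> real"
  assumes "prob_space M" "subalgebra M G" "f \<in> borel_measurable M" "integrable M (\<lambda>x. (f x)^2)"
  shows "integrable M (\<lambda>x. (f x - real_cond_exp M G f x)^2)"
    "(\<integral>x. (f x - real_cond_exp M G f x)^2 \<partial>M) \<le> 4 * (\<integral>x. (f x)^2 \<partial>M)"
    "AE x in M. real_cond_exp M G (\<lambda>x. f x - real_cond_exp M G f x) x = 0"
proof -
  interpret prob_space M by fact
  interpret finite_measure_subalgebra M G using assms(2) by unfold_locales
  interpret sigma_finite_subalgebra M G by (rule finite_measure_subalgebra_is_sigma_finite) unfold_locales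
  have fi: "integrable M f" by (rule sq_int_imp_int[OF assms(1,4,3)])
  have ci: "integrable M (real_cond_exp M G f)" by (rule real_cond_exp_int(1)[OF fi])
  have cF: "real_cond_exp M G f \<in> borel_measurable G" by simp
  have jen: "AE x in M. (real_cond_exp M G f x)^2 \<le> real_cond_exp M G (\<lambda>x. (f x)^2) x"
    using real_cond_exp_jensens_inequality(2)[OF fi, where I=UNIV and q="\<lambda>y. y^2"] assms(4) convex_power2
    by auto
  have ci2: "integrable M (\<lambda>x. (real_cond_exp M G f x)^2)"
    using integrable_convex_cond_exp[OF fi, where I=UNIV and q="\<lambda>y. y^2"] assms(4) convex_power2
    by auto
  have c2: "(\<integral>x. (real_cond_exp M G f x)^2 \<partial>M) \<le> (\<integral>x. (f x)^2 \<partial>M)"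
  proof -
    have "(\<integral>x. (real_cond_exp M G f x)^2 \<partial>M) \<le> (\<integral>x. real_cond_exp M G (\<lambda>x. (f x)^2) x \<partial>M)"
      by (rule integral_mono_AE[OF ci2 real_cond_exp_int(1)[OF assms(4)] jen])
    also have "\<dots> = (\<integral>x. (f x)^2 \<partial>M)" by (rule real_cond_exp_int(2)[OF assms(4)])
    finally show ?thesis .
  qed
  have pw: "(f x - real_cond_exp M G f x)^2 \<le> 2 * (f x)^2 + 2 * (real_cond_exp M G f x)^2" for x
  proof -
    have "0 \<le> (f x + real_cond_exp M G f x)^2" by simp
    then show ?thesis by (simp add: power2_eq_square algebra_simps)
  qed
  have bi: "integrable M (\<lambda>x. 2 * (f x)^2 + 2 * (real_cond_exp M G f x)^2)"
    using assms(4) ci2 by auto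
  show i: "integrable M (\<lambda>x. (f x - real_cond_exp M G f x)^2)"
  proof (rule Bochner_Integration.integrable_bound[OF bi])
    show "(\<lambda>x. (f x - real_cond_exp M G f x)^2) \<in> borel_measurable M" using assms(3) by measurable
    show "AE x in M. norm ((f x - real_cond_exp M G f x)^2) \<le> norm (2 * (f x)^2 + 2 * (real_cond_exp M G f x)^2)"
      using pw by auto
  qed
  have "(\<integral>x. (f x - real_cond_exp M G f x)^2 \<partial>M) \<le> (\<integral>x. 2 * (f x)^2 + 2 * (real_cond_exp M G f x)^2 \<partial>M)"
    by (rule integral_mono[OF i bi pw])
  also have "\<dots> = 2 * (\<integral>x. (f x)^2 \<partial>M) + 2 * (\<integral>x. (real_cond_exp M G f x)^2 \<partial>M)"
    using assms(4) ci2 by simp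
  finally show "(\<integral>x. (f x - real_cond_exp M G f x)^2 \<partial>M) \<le> 4 * (\<integral>x. (f x)^2 \<partial>M)"
    using c2 by simp
  show "AE x in M. real_cond_exp M G (\<lambda>x. f x - real_cond_exp M G f x) x = 0"
    using real_cond_exp_diff[OF fi ci] real_cond_exp_F_meas[OF ci cF]
    by eventually_elim simp
qed

lemma fourth_bound:
  fixes q d :: "'a \<Rightarrow> real" and G :: "'a measure"
  assumes "prob_space M" "subalgebra M G" "q \<in> borel_measurable G" "d \<in> borel_measurable M"
    "integrable M (\<lambda>x. (q x)^2)" "D \<ge> 0"
    "AE x in M. nn_cond_exp M G (\<lambda>y. ennreal ((d y)^4)) x \<le> ennreal D"
  shows "integrable M (\<lambda>x. (q x)^2 * (d x)^4)" "(\<integral>x. (q x)^2 * (d x)^4 \<partial>M) \<le> D * (\<integral>x. (q x)^2 \<partial>M)"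
    "integrable M (\<lambda>x. (d x)^4)" "(\<integral>x. (d x)^4 \<partial>M) \<le> D"
proof -
  interpret prob_space M by fact
  interpret finite_measure_subalgebra M G using assms(2) by unfold_locales
  interpret sigma_finite_subalgebra M G by (rule finite_measure_subalgebra_is_sigma_finite) unfold_locales
  have qM: "q \<in> borel_measurable M" using measurable_from_subalg[OF assms(2,3)] .
  have gen: "(\<integral>\<^sup>+x. ennreal (h x) * ennreal ((d x)^4) \<partial>M) \<le> ennreal D * (\<integral>\<^sup>+x. ennreal (h x) \<partial>M)"
    if hm: "h \<in> borel_measurable G" for h :: "'a \<Rightarrow> real"
  proof -
    have hM: "h \<in> borel_measurable M" using measurable_from_subalg[OF assms(2) hm] .
    have "(\<integral>\<^sup>+x. ennreal (h x) * ennreal ((d x)^4) \<partial>M) = (\<integral>\<^sup>+x. ennreal (h x) * nn_cond_exp M G (\<lambda>y. ennreal ((d y)^4)) x \<partial>M)"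
      by (rule nn_cond_exp_intg[symmetric]) (use hm assms(4) in auto)
    also have "\<dots> \<le> (\<integral>\<^sup>+x. ennreal (h x) * ennreal D \<partial>M)"
      by (rule nn_integral_mono_AE) (use assms(7) in \<open>auto elim!: AE_mp intro!: mult_left_mono\<close>)
    also have "\<dots> = ennreal D * (\<integral>\<^sup>+x. ennreal (h x) \<partial>M)"
      by (subst nn_integral_multc) (use hM in \<open>auto simp: mult.commute\<close>)
    finally show ?thesis .
  qed
  have q2: "(\<integral>\<^sup>+x. ennreal ((q x)^2) \<partial>M) = ennreal (\<integral>x. (q x)^2 \<partial>M)"
    by (rule nn_integral_eq_integral[OF assms(5)]) simp
  have b1: "(\<integral>\<^sup>+x. ennreal ((q x)^2 * (d x)^4) \<partial>M) \<le> ennreal (D * (\<integral>x. (q x)^2 \<partial>M))"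
  proof -
    have "(\<integral>\<^sup>+x. ennreal ((q x)^2 * (d x)^4) \<partial>M) = (\<integral>\<^sup>+x. ennreal ((q x)^2) * ennreal ((d x)^4) \<partial>M)"
      by (simp add: ennreal_mult)
    also have "\<dots> \<le> ennreal D * (\<integral>\<^sup>+x. ennreal ((q x)^2) \<partial>M)"
      by (rule gen) (use assms(3) in measurable)
    finally show ?thesis unfolding q2 using assms(6) by (simp add: ennreal_mult)
  qed
  have b2: "(\<integral>\<^sup>+x. ennreal ((d x)^4) \<partial>M) \<le> ennreal D"
  proof -
    have "(\<integral>\<^sup>+x. ennreal ((d x)^4) \<partial>M) = (\<integral>\<^sup>+x. ennreal 1 * ennreal ((d x)^4) \<partial>M)" by simp
    also have "\<dots> \<le> ennreal D * (\<integral>\<^sup>+x. ennreal 1 \<partial>M)"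
      by (rule gen) simp
    finally show ?thesis by (simp add: emeasure_space_1)
  qed
  show i1: "integrable M (\<lambda>x. (q x)^2 * (d x)^4)"
  proof (rule integrableI_bounded)
    show "(\<lambda>x. (q x)^2 * (d x)^4) \<in> borel_measurable M" using qM assms(4) by measurable
    have "(\<integral>\<^sup>+x. ennreal (norm ((q x)^2 * (d x)^4)) \<partial>M) = (\<integral>\<^sup>+x. ennreal ((q x)^2 * (d x)^4) \<partial>M)"
      by (intro nn_integral_cong) (simp add: abs_mult)
    then show "(\<integral>\<^sup>+x. ennreal (norm ((q x)^2 * (d x)^4)) \<partial>M) < \<infinity>"
      using b1 by (simp add: le_less_trans)
  qed
  show i2: "integrable M (\<lambda>x. (d x)^4)"
  proof (rule integrableI_bounded)
    show "(\<lambda>x. (d x)^4) \<in> borel_measurable M" using assms(4) by measurable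
    have "(\<integral>\<^sup>+x. ennreal (norm ((d x)^4)) \<partial>M) = (\<integral>\<^sup>+x. ennreal ((d x)^4) \<partial>M)"
      by (intro nn_integral_cong) simp
    then show "(\<integral>\<^sup>+x. ennreal (norm ((d x)^4)) \<partial>M) < \<infinity>"
      using b2 by (simp add: le_less_trans)
  qed
  have "ennreal (\<integral>x. (q x)^2 * (d x)^4 \<partial>M) \<le> ennreal (D * (\<integral>x. (q x)^2 \<partial>M))"
    using b1 nn_integral_eq_integral[OF i1] by simp
  then show "(\<integral>x. (q x)^2 * (d x)^4 \<partial>M) \<le> D * (\<integral>x. (q x)^2 \<partial>M)"
    using assms(6) by (subst (asm) ennreal_le_iff) auto
  have "ennreal (\<integral>x. (d x)^4 \<partial>M) \<le> ennreal D"
    using b2 nn_integral_eq_integral[OF i2] by simp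
  then show "(\<integral>x. (d x)^4 \<partial>M) \<le> D"
    using assms(6) by (subst (asm) ennreal_le_iff) auto
qed



lemma telesc:
  fixes Lq a c e pp X Y :: "nat \<Rightarrow> real"
  assumes L0: "\<And>n. Lq n \<ge> 0"
    and Xd: "\<And>t. X t = (Lq (Suc t) - Lq t) - c t"
    and Yd: "\<And>t. Y t = pp t - e t"
    and dr: "\<And>t. c t + V * e t \<le> B + V * ps - \<epsilon> * a t"
    and n: "n > 0"
  shows "V * ((\<Sum>t<n. pp t) / real n) + \<epsilon> * ((\<Sum>t<n. a t) / real n)
     \<le> B + V * ps + (Lq 0 / real n + (\<Sum>t<n. X t) / real n + V * ((\<Sum>t<n. Y t) / real n))"
proof -
  have s1: "(\<Sum>t<n. c t + V * e t) \<le> (\<Sum>t<n. B + V * ps - \<epsilon> * a t)"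
    by (rule sum_mono) (rule dr)
  have c: "(\<Sum>t<n. c t) = Lq n - Lq 0 - (\<Sum>t<n. X t)"
  proof -
    have "(\<Sum>t<n. c t) = (\<Sum>t<n. (Lq (Suc t) - Lq t) - X t)" using Xd by (intro sum.cong) auto
    also have "\<dots> = (\<Sum>t<n. Lq (Suc t) - Lq t) - (\<Sum>t<n. X t)" by (rule sum_subtractf)
    also have "\<dots> = Lq n - Lq 0 - (\<Sum>t<n. X t)" by (simp only: sum_lessThan_telescope)
    finally show ?thesis .
  qed
  have e: "(\<Sum>t<n. e t) = (\<Sum>t<n. pp t) - (\<Sum>t<n. Y t)"
  proof -
    have "(\<Sum>t<n. e t) = (\<Sum>t<n. pp t - Y t)" using Yd by (intro sum.cong) auto
    then show ?thesis by (simp add: sum_subtractf)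
  qed
  have "Lq n - Lq 0 - (\<Sum>t<n. X t) + V * ((\<Sum>t<n. pp t) - (\<Sum>t<n. Y t)) \<le> real n * (B + V * ps) - \<epsilon> * (\<Sum>t<n. a t)"
  proof -
    have l: "(\<Sum>t<n. c t + V * e t) = (\<Sum>t<n. c t) + V * (\<Sum>t<n. e t)"
      by (simp add: sum.distrib sum_distrib_left)
    have r: "(\<Sum>t<n. B + V * ps - \<epsilon> * a t) = real n * (B + V * ps) - \<epsilon> * (\<Sum>t<n. a t)"
      by (simp add: sum_subtractf sum_distrib_left)
    show ?thesis using s1 unfolding l r c e .
  qed
  then have "V * (\<Sum>t<n. pp t) + \<epsilon> * (\<Sum>t<n. a t) \<le> real n * (B + V * ps) + Lq 0 + (\<Sum>t<n. X t) + V * (\<Sum>t<n. Y t)"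
    using L0[of n] by (simp add: algebra_simps)
  then have "(V * (\<Sum>t<n. pp t) + \<epsilon> * (\<Sum>t<n. a t)) / real n \<le> (real n * (B + V * ps) + Lq 0 + (\<Sum>t<n. X t) + V * (\<Sum>t<n. Y t)) / real n"
    using n by (intro divide_right_mono) auto
  then show ?thesis using n by (simp add: field_simps)
qed

lemma lim_a:
  fixes P A r :: "nat \<Rightarrow> real"
  assumes V: "V > 0" and eps: "\<epsilon> \<ge> 0" and A0: "\<And>n. A n \<ge> 0"
    and ineq: "\<And>n. n > 0 \<Longrightarrow> V * P n + \<epsilon> * A n \<le> B + V * ps + r n"
    and r: "r \<longlonglongrightarrow> 0"
  shows "limsup (\<lambda>n. ereal (P n)) \<le> ereal (ps + B / V)"
proof -
  have le: "P n \<le> ps + B / V + r n / V" if "n > 0" for n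
  proof -
    have "V * P n \<le> B + V * ps + r n" using ineq[OF that] eps A0[of n] by (smt (verit) mult_nonneg_nonneg)
    then show ?thesis using V by (simp add: field_simps)
  qed
  have "limsup (\<lambda>n. ereal (P n)) \<le> limsup (\<lambda>n. ereal (ps + B / V + r n / V))"
    by (rule Limsup_mono) (use le in \<open>auto simp: eventually_sequentially intro!: exI[of _ 1]\<close>)
  also have "\<dots> = ereal (ps + B / V)"
  proof (rule lim_imp_Limsup)
    show "((\<lambda>n. ereal (ps + B / V + r n / V)) \<longlongrightarrow> ereal (ps + B / V)) sequentially"
    proof -
      have "(\<lambda>n. ps + B / V + r n / V) \<longlonglongrightarrow> ps + B / V + 0 / V"
        using V by (intro tendsto_intros r) auto
      then show ?thesis unfolding lim_ereal using V by simp
    qed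
  qed simp
  finally show ?thesis .
qed

lemma lim_b:
  fixes P A r U :: "nat \<Rightarrow> real"
  assumes eps: "\<epsilon> > 0" and V: "V \<ge> 0"
    and ineq: "\<And>n. n > 0 \<Longrightarrow> V * P n + \<epsilon> * A n \<le> B + V * ps + r n"
    and U: "\<And>n. n > 0 \<Longrightarrow> U n = ps - P n"
    and r: "r \<longlonglongrightarrow> 0"
  shows "limsup (\<lambda>n. ereal (A n)) \<le> ereal (B / \<epsilon>) + ereal (V / \<epsilon>) * limsup (\<lambda>n. ereal (U n))"
proof -
  have le: "ereal (A n) \<le> (ereal (B / \<epsilon>) + ereal (V / \<epsilon>) * ereal (U n)) + ereal (r n / \<epsilon>)" if "n > 0" for n
  proof -
    have "V * U n = V * ps - V * P n" using U[OF that] by (simp add: right_diff_distrib)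
    then have "\<epsilon> * A n \<le> B + V * U n + r n" using ineq[OF that] by linarith
    then have "A n \<le> B / \<epsilon> + (V / \<epsilon>) * U n + r n / \<epsilon>" using eps by (simp add: field_simps)
    then show ?thesis by simp
  qed
  have "limsup (\<lambda>n. ereal (A n)) \<le> limsup (\<lambda>n. (ereal (B / \<epsilon>) + ereal (V / \<epsilon>) * ereal (U n)) + ereal (r n / \<epsilon>))"
    by (rule Limsup_mono) (use le in \<open>auto simp: eventually_sequentially intro!: exI[of _ 1]\<close>)
  also have "\<dots> \<le> limsup (\<lambda>n. ereal (B / \<epsilon>) + ereal (V / \<epsilon>) * ereal (U n)) + limsup (\<lambda>n. ereal (r n / \<epsilon>))"
    by (rule ereal_limsup_add_mono)
  also have "limsup (\<lambda>n. ereal (r n / \<epsilon>)) = 0"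
  proof -
    have "limsup (\<lambda>n. ereal (r n / \<epsilon>)) = ereal 0"
      by (rule lim_imp_Limsup) (use tendsto_divide[OF r tendsto_const, of \<epsilon>] eps in auto)
    then show ?thesis by (simp add: zero_ereal_def)
  qed
  also have "limsup (\<lambda>n. ereal (B / \<epsilon>) + ereal (V / \<epsilon>) * ereal (U n)) = ereal (B / \<epsilon>) + limsup (\<lambda>n. ereal (V / \<epsilon>) * ereal (U n))"
    by (rule Limsup_add_ereal_left) simp_all
  also have "limsup (\<lambda>n. ereal (V / \<epsilon>) * ereal (U n)) = ereal (V / \<epsilon>) * limsup (\<lambda>n. ereal (U n))"
    by (rule limsup_ereal_mult_left) (use V eps in auto)
  finally show ?thesis by simp
qed

lemma dL_bound:
  fixes w a b :: real
  shows "((1/2) * w * (a^2 - b^2))^2 \<le> w^2 * (2 * b^2 + 2 * (b^2 * (a - b)^4) + (a - b)^4)"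
proof -
  define d where "d = a - b"
  have a: "a = b + d" unfolding d_def by simp
  have e1: "((1/2) * w * (a^2 - b^2))^2 = w^2 / 4 * (d^2 * (2 * b + d)^2)"
    unfolding a by (simp add: power2_eq_square algebra_simps)
  have h1: "(2 * b + d)^2 \<le> 8 * b^2 + 2 * d^2"
  proof -
    have "0 \<le> (2 * b - d)^2" by simp
    then show ?thesis by (simp add: power2_eq_square algebra_simps)
  qed
  have h2: "d^2 \<le> 1 + d^4"
  proof -
    have "0 \<le> (d^2 - 1)^2" by simp
    then have "2 * d^2 \<le> 1 + d^4" by (simp add: power2_eq_square algebra_simps power4_eq_xxxx)
    moreover have "0 \<le> d^4" by simp
    moreover have "0 \<le> d^2" by simp
    ultimately show ?thesis by linarith
  qed
  have "d^2 * (2 * b + d)^2 \<le> d^2 * (8 * b^2 + 2 * d^2)" by (rule mult_left_mono[OF h1]) simp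
  also have "\<dots> = 8 * (b^2 * d^2) + 2 * d^4" by (simp add: algebra_simps power4_eq_xxxx power2_eq_square)
  also have "\<dots> \<le> 8 * (b^2 * (1 + d^4)) + 2 * d^4"
    using mult_left_mono[OF h2, of "b^2"] by simp
  also have "\<dots> \<le> 4 * (2 * b^2 + 2 * (b^2 * d^4) + d^4)" by (simp add: algebra_simps)
  finally have "d^2 * (2 * b + d)^2 \<le> 4 * (2 * b^2 + 2 * (b^2 * d^4) + d^4)" .
  then have "w^2 / 4 * (d^2 * (2 * b + d)^2) \<le> w^2 / 4 * (4 * (2 * b^2 + 2 * (b^2 * d^4) + d^4))"
    by (rule mult_left_mono) simp
  also have "\<dots> = w^2 * (2 * b^2 + 2 * (b^2 * d^4) + d^4)" by simp
  finally show ?thesis unfolding e1 d_def[symmetric] .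
qed



theorem theorem6:
  fixes M :: "'a measure" and K :: nat
    and Q :: "nat \<Rightarrow> nat \<Rightarrow> 'a \<Rightarrow> real"   \<comment> \<open>Q t k = Q_k(t)\<close>
    and p :: "nat \<Rightarrow> 'a \<Rightarrow> real"
    and w :: "nat \<Rightarrow> real" and D B pstar V \<epsilon> :: real
  assumes "prob_space M"
    and Qmeas: "\<And>t k. Q t k \<in> borel_measurable M"
    and pmeas: "\<And>t. p t \<in> borel_measurable M"
    and w_pos: "\<And>k. k \<in> {1..K} \<Longrightarrow> w k > 0"
    and p_sq: "\<And>t. integrable M (\<lambda>x. (p t x)^2)"
    and p_sum: "summable (\<lambda>\<tau>. (\<integral>x. (p \<tau> x)^2 \<partial>M) / (real \<tau>)^2)"
    and D_pos: "D > 0"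
    and fourth: "\<And>t k. k \<in> {1..K} \<Longrightarrow>
        AE x in M. nn_cond_exp M (qsig M K Q t) (\<lambda>y. ennreal ((Q (Suc t) k y - Q t k y)^4)) x \<le> ennreal D"
    and Q_sq: "\<And>t k. k \<in> {1..K} \<Longrightarrow> integrable M (\<lambda>x. (Q t k x)^2)"
    and Q_sum: "\<And>k. k \<in> {1..K} \<Longrightarrow> summable (\<lambda>t. (\<integral>x. (Q t k x)^2 \<partial>M) / (real t)^2)"
    and V_nonneg: "V \<ge> 0" and eps_nonneg: "\<epsilon> \<ge> 0"
    and drift: "\<And>t. AE x in M.
        real_cond_exp M (hist M K Q p t) (\<lambda>y. lyap K w (\<lambda>k. Q (Suc t) k y) - lyap K w (\<lambda>k. Q t k y)) x
        + V * real_cond_exp M (hist M K Q p t) (p t) x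
        \<le> B + V * pstar - \<epsilon> * (\<Sum>k=1..K. \<bar>Q t k x\<bar>)"
  shows "(V > 0 \<longrightarrow> (AE x in M.
            limsup (\<lambda>t. ereal ((1 / real t) * (\<Sum>\<tau><t. p \<tau> x))) \<le> ereal (pstar + B / V)))
       \<and> (\<epsilon> > 0 \<longrightarrow> (AE x in M.
            limsup (\<lambda>t. ereal ((1 / real t) * (\<Sum>\<tau><t. \<Sum>k=1..K. \<bar>Q \<tau> k x\<bar>)))
              \<le> ereal (B / \<epsilon>) + ereal (V / \<epsilon>) *
                 limsup (\<lambda>t. ereal ((1 / real t) * (\<Sum>\<tau><t. pstar - p \<tau> x)))))"
proof -
  note P = assms(1)
  interpret prob_space M by (rule P)
  define F where "F = (\<lambda>t. hist M K Q p t)"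
  define Hs where "Hs = (\<lambda>t. {Q \<tau> k | \<tau> k. \<tau> \<le> t \<and> k \<in> {1..K}} \<union> {p \<tau> | \<tau>. \<tau> < t})"
  have Fd: "F t = gen_sigma M (Hs t)" for t unfolding F_def Hs_def hist_def by simp
  have subF: "subalgebra M (F t)" for t
    unfolding Fd by (rule gs_sub) (auto simp: Hs_def Qmeas pmeas)
  have monoF: "sets (F n) \<subseteq> sets (F m)" if "n \<le> m" for n m
  proof -
    have "Hs n \<subseteq> Hs m"
    proof
      fix f assume "f \<in> Hs n"
      then show "f \<in> Hs m" unfolding Hs_def using that
        by (auto 0 4 intro: le_trans less_le_trans)
    qed
    then show ?thesis unfolding Fd by (rule gs_mono)
  qed
  have filtF: "filt M F" unfolding filt_def using subF monoF by auto
  have QF: "Q \<tau> k \<in> borel_measurable (F t)" if "\<tau> \<le> t" "k \<in> {1..K}" for \<tau> t k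
    unfolding Fd by (rule gs_meas) (use that in \<open>auto simp: Hs_def\<close>)
  have pF: "p \<tau> \<in> borel_measurable (F t)" if "\<tau> < t" for \<tau> t
    unfolding Fd by (rule gs_meas) (use that in \<open>auto simp: Hs_def\<close>)
  define Lq where "Lq = (\<lambda>t y. lyap K w (\<lambda>k. Q t k y))"
  define dL where "dL = (\<lambda>t y. Lq (Suc t) y - Lq t y)"
  have LqF: "Lq \<tau> \<in> borel_measurable (F t)" if "\<tau> \<le> t" for \<tau> t
  proof -
    have "(\<lambda>y. \<Sum>k = 1..K. w k * (Q \<tau> k y)^2) \<in> borel_measurable (F t)"
    proof (rule borel_measurable_sum)
      fix k assume "k \<in> {1..K}"
      then have [measurable]: "Q \<tau> k \<in> borel_measurable (F t)" using QF that by auto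
      show "(\<lambda>y. w k * (Q \<tau> k y)^2) \<in> borel_measurable (F t)" by measurable
    qed
    then show ?thesis unfolding Lq_def lyap_def by measurable
  qed
  have dLF: "dL t \<in> borel_measurable (F (Suc t))" for t
    unfolding dL_def using LqF[of "Suc t" "Suc t"] LqF[of t "Suc t"] by measurable
  have dLM: "dL t \<in> borel_measurable M" for t using meas_M[OF filtF dLF] .
  have LqM: "Lq t \<in> borel_measurable M" for t using meas_M[OF filtF LqF[OF order_refl]] .
  define dd where "dd = (\<lambda>t k y. Q (Suc t) k y - Q t k y)"
  have dLe: "dL t y = (\<Sum>k = 1..K. (1/2) * w k * ((Q (Suc t) k y)^2 - (Q t k y)^2))" for t y
  proof -
    have "(\<Sum>k = 1..K. (1/2) * w k * ((Q (Suc t) k y)^2 - (Q t k y)^2)) =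
        (\<Sum>k = 1..K. (1/2) * (w k * (Q (Suc t) k y)^2) - (1/2) * (w k * (Q t k y)^2))"
      by (intro sum.cong) (auto simp: algebra_simps)
    also have "\<dots> = (1/2) * (\<Sum>k = 1..K. w k * (Q (Suc t) k y)^2) - (1/2) * (\<Sum>k = 1..K. w k * (Q t k y)^2)"
      by (simp add: sum_subtractf sum_distrib_left)
    finally show ?thesis unfolding dL_def Lq_def lyap_def by simp
  qed
  define h where "h = (\<lambda>t y. real K * (\<Sum>k = 1..K. (w k)^2 * (2 * (Q t k y)^2 + 2 * ((Q t k y)^2 * (dd t k y)^4) + (dd t k y)^4)))"
  have dLh: "(dL t y)^2 \<le> h t y" for t y
  proof -
    have "(dL t y)^2 \<le> (\<Sum>k = 1..K. ((1/2) * w k * ((Q (Suc t) k y)^2 - (Q t k y)^2))^2) * card {1..K}"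
      unfolding dLe by (rule sum_squared_le_sum_of_squares)
    also have "\<dots> \<le> (\<Sum>k = 1..K. (w k)^2 * (2 * (Q t k y)^2 + 2 * ((Q t k y)^2 * (dd t k y)^4) + (dd t k y)^4)) * card {1..K}"
    proof (intro mult_right_mono sum_mono)
      fix k
      show "((1/2) * w k * ((Q (Suc t) k y)^2 - (Q t k y)^2))^2 \<le> (w k)^2 * (2 * (Q t k y)^2 + 2 * ((Q t k y)^2 * (dd t k y)^4) + (dd t k y)^4)"
        unfolding dd_def by (rule dL_bound)
    qed simp
    finally show ?thesis unfolding h_def by (simp add: mult.commute)
  qed
  have fb: "integrable M (\<lambda>x. (Q t k x)^2 * (dd t k x)^4) \<and> (\<integral>x. (Q t k x)^2 * (dd t k x)^4 \<partial>M) \<le> D * (\<integral>x. (Q t k x)^2 \<partial>M)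
      \<and> integrable M (\<lambda>x. (dd t k x)^4) \<and> (\<integral>x. (dd t k x)^4 \<partial>M) \<le> D"
    if k: "k \<in> {1..K}" for t k
  proof -
    have sq: "subalgebra M (qsig M K Q t)"
      unfolding qsig_def by (rule gs_sub) (auto simp: Qmeas)
    have qm: "Q t k \<in> borel_measurable (qsig M K Q t)"
      unfolding qsig_def by (rule gs_meas) (use k in auto)
    have dm: "dd t k \<in> borel_measurable M" unfolding dd_def using Qmeas by measurable
    have f4: "AE x in M. nn_cond_exp M (qsig M K Q t) (\<lambda>y. ennreal ((dd t k y)^4)) x \<le> ennreal D"
      unfolding dd_def by (rule fourth[OF k])
    note r = fourth_bound[OF P sq qm dm Q_sq[OF k] _ f4]
    show ?thesis using r D_pos by auto
  qed
  define EQ where "EQ = (\<lambda>k t. \<integral>x. (Q t k x)^2 \<partial>M)"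
  define bnd where "bnd = (\<lambda>t. real K * (\<Sum>k = 1..K. (w k)^2 * ((2 + 2 * D) * EQ k t + D)))"
  have hi: "integrable M (h t)" for t
  proof -
    have hs: "integrable M (\<lambda>y. \<Sum>k = 1..K. (w k)^2 * (2 * (Q t k y)^2 + 2 * ((Q t k y)^2 * (dd t k y)^4) + (dd t k y)^4))"
    proof (rule Bochner_Integration.integrable_sum)
      fix k assume k: "k \<in> {1..K}"
      show "integrable M (\<lambda>y. (w k)^2 * (2 * (Q t k y)^2 + 2 * ((Q t k y)^2 * (dd t k y)^4) + (dd t k y)^4))"
        using Q_sq[OF k] fb[OF k] by auto
    qed
    then show ?thesis unfolding h_def by auto
  qed
  have hint: "(\<integral>y. h t y \<partial>M) \<le> bnd t" for t
  proof -
    have "(\<integral>y. h t y \<partial>M) = real K * (\<Sum>k = 1..K. \<integral>y. (w k)^2 * (2 * (Q t k y)^2 + 2 * ((Q t k y)^2 * (dd t k y)^4) + (dd t k y)^4) \<partial>M)"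
      unfolding h_def integral_mult_right_zero
      by (subst Bochner_Integration.integral_sum) (use Q_sq fb in auto)
    also have "\<dots> \<le> bnd t"
      unfolding bnd_def
    proof (intro mult_left_mono sum_mono)
      fix k assume k: "k \<in> {1..K}"
      have "(\<integral>y. (w k)^2 * (2 * (Q t k y)^2 + 2 * ((Q t k y)^2 * (dd t k y)^4) + (dd t k y)^4) \<partial>M)
          = (w k)^2 * (2 * EQ k t + 2 * (\<integral>y. (Q t k y)^2 * (dd t k y)^4 \<partial>M) + (\<integral>y. (dd t k y)^4 \<partial>M))"
        unfolding EQ_def integral_mult_right_zero using Q_sq[OF k] fb[OF k] by simp
      also have "\<dots> \<le> (w k)^2 * ((2 + 2 * D) * EQ k t + D)"
      proof (rule mult_left_mono)
        have a: "(\<integral>y. (Q t k y)^2 * (dd t k y)^4 \<partial>M) \<le> D * EQ k t" using fb[OF k, of t] unfolding EQ_def by auto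
        have b: "(\<integral>y. (dd t k y)^4 \<partial>M) \<le> D" using fb[OF k, of t] by auto
        have c: "(2 + 2 * D) * EQ k t = 2 * EQ k t + 2 * (D * EQ k t)" by (simp add: ring_distribs)
        show "2 * EQ k t + 2 * (\<integral>y. (Q t k y)^2 * (dd t k y)^4 \<partial>M) + (\<integral>y. (dd t k y)^4 \<partial>M) \<le> (2 + 2 * D) * EQ k t + D"
          using a b c by linarith
      qed simp
      finally show "(\<integral>y. (w k)^2 * (2 * (Q t k y)^2 + 2 * ((Q t k y)^2 * (dd t k y)^4) + (dd t k y)^4) \<partial>M)
          \<le> (w k)^2 * ((2 + 2 * D) * EQ k t + D)" .
    qed simp
    finally show ?thesis .
  qed
  have dLi: "integrable M (\<lambda>y. (dL t y)^2)" for t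
  proof (rule Bochner_Integration.integrable_bound[OF hi])
    show "(\<lambda>y. (dL t y)^2) \<in> borel_measurable M" using dLM by measurable
    show "AE x in M. norm ((dL t x)^2) \<le> norm (h t x)"
      using dLh[of t] by (auto intro!: AE_I2 order_trans[OF _ abs_ge_self])
  qed
  have dLint: "(\<integral>y. (dL t y)^2 \<partial>M) \<le> bnd t" for t
    using integral_mono[OF dLi[of t] hi[of t] dLh[of t]] hint[of t] by linarith
  define X where "X = (\<lambda>t x. dL t x - real_cond_exp M (F t) (dL t) x)"
  define Y where "Y = (\<lambda>t x. p t x - real_cond_exp M (F t) (p t) x)"
  have pM: "p t \<in> borel_measurable M" for t by (rule pmeas)
  have ceF: "real_cond_exp M (F t) f \<in> borel_measurable (F (Suc t))" for t f
    using meas_mono[OF filtF _ borel_measurable_cond_exp[of M "F t" f], of "Suc t"] by simp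
  have avX: "AE x in M. (\<lambda>n. (\<Sum>k<n. X k x) / real n) \<longlonglongrightarrow> 0"
  proof (rule slln[OF P filtF])
    show "X n \<in> borel_measurable (F (Suc n))" for n unfolding X_def using dLF[of n] ceF[of n "dL n"] by measurable
    show "integrable M (\<lambda>x. (X n x)^2)" for n unfolding X_def by (rule cdiff(1)[OF P subF[of n] dLM[of n] dLi[of n]])
    show "AE x in M. real_cond_exp M (F n) (X n) x = 0" for n unfolding X_def by (rule cdiff(3)[OF P subF[of n] dLM[of n] dLi[of n]])
    define g where "g = (\<lambda>t. (4 * real K) * (\<Sum>k = 1..K. ((w k)^2 * (2 + 2 * D)) * (EQ k t / (real t)^2) + ((w k)^2 * D) * inverse ((real t)^2)))"
    have gs: "summable g"
      unfolding g_def
    proof (intro summable_mult summable_sum summable_add)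
      fix k assume k: "k \<in> {1..K}"
      show "summable (\<lambda>t. EQ k t / (real t)^2)" unfolding EQ_def by (rule Q_sum[OF k])
      show "summable (\<lambda>t. inverse ((real t)^2))" using inverse_power_summable[of 2, where 'a=real] by simp
    qed
    have gb: "4 * bnd t / (real t)^2 = g t" for t
    proof -
      have pt: "((w k)^2 * (2 + 2 * D)) * (EQ k t / (real t)^2) + ((w k)^2 * D) * inverse ((real t)^2)
          = (w k)^2 * ((2 + 2 * D) * EQ k t + D) / (real t)^2" for k
        by (simp add: divide_inverse algebra_simps)
      show ?thesis unfolding g_def bnd_def pt sum_divide_distrib[symmetric] by simp
    qed
    show "summable (\<lambda>n. (\<integral>x. (X n x)^2 \<partial>M) / (real n)^2)"
    proof (rule summable_comparison_test'[OF gs])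
      fix n :: nat assume "n \<ge> 0"
      have "(\<integral>x. (X n x)^2 \<partial>M) \<le> 4 * bnd n"
        unfolding X_def using cdiff(2)[OF P subF[of n] dLM[of n] dLi[of n]] dLint[of n] by linarith
      then have "(\<integral>x. (X n x)^2 \<partial>M) / (real n)^2 \<le> 4 * bnd n / (real n)^2"
        by (rule divide_right_mono) simp
      then show "norm ((\<integral>x. (X n x)^2 \<partial>M) / (real n)^2) \<le> g n" unfolding gb by simp
    qed
  qed
  have avY: "AE x in M. (\<lambda>n. (\<Sum>k<n. Y k x) / real n) \<longlonglongrightarrow> 0"
  proof (rule slln[OF P filtF])
    show "Y n \<in> borel_measurable (F (Suc n))" for n unfolding Y_def using pF[of n "Suc n"] ceF[of n "p n"] by measurable
    show "integrable M (\<lambda>x. (Y n x)^2)" for n unfolding Y_def by (rule cdiff(1)[OF P subF[of n] pM[of n] p_sq[of n]])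
    show "AE x in M. real_cond_exp M (F n) (Y n) x = 0" for n unfolding Y_def by (rule cdiff(3)[OF P subF[of n] pM[of n] p_sq[of n]])
    show "summable (\<lambda>n. (\<integral>x. (Y n x)^2 \<partial>M) / (real n)^2)"
    proof (rule summable_comparison_test'[OF summable_mult[OF p_sum, of 4]])
      fix n :: nat assume "n \<ge> 0"
      have "(\<integral>x. (Y n x)^2 \<partial>M) / (real n)^2 \<le> (4 * (\<integral>x. (p n x)^2 \<partial>M)) / (real n)^2"
        by (rule divide_right_mono) (use cdiff(2)[OF P subF[of n] pM[of n] p_sq[of n]] in \<open>auto simp: Y_def\<close>)
      then show "norm ((\<integral>x. (Y n x)^2 \<partial>M) / (real n)^2) \<le> 4 * ((\<integral>x. (p n x)^2 \<partial>M) / (real n)^2)" by simp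
    qed
  qed
  have dr: "AE x in M. \<forall>t. real_cond_exp M (F t) (dL t) x + V * real_cond_exp M (F t) (p t) x
        \<le> B + V * pstar - \<epsilon> * (\<Sum>k=1..K. \<bar>Q t k x\<bar>)"
    unfolding AE_all_countable F_def dL_def Lq_def using drift by blast
  have Lq0: "Lq n x \<ge> 0" for n x
  proof -
    have "0 \<le> (\<Sum>k = 1..K. w k * (Q n k x)^2)"
    proof (rule sum_nonneg)
      fix k assume k: "k \<in> {1..K}"
      have "0 < w k" by (rule w_pos[OF k])
      then show "0 \<le> w k * (Q n k x)^2" by simp
    qed
    then show ?thesis unfolding Lq_def lyap_def by simp
  qed
  have main: "AE x in M. \<forall>n>0.
      V * ((1 / real n) * (\<Sum>\<tau><n. p \<tau> x)) + \<epsilon> * ((1 / real n) * (\<Sum>\<tau><n. \<Sum>k=1..K. \<bar>Q \<tau> k x\<bar>))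
       \<le> B + V * pstar + (Lq 0 x / real n + (\<Sum>t<n. X t x) / real n + V * ((\<Sum>t<n. Y t x) / real n))"
    using dr
  proof (rule AE_mp, intro AE_I2 impI allI)
    fix x n assume d: "\<forall>t. real_cond_exp M (F t) (dL t) x + V * real_cond_exp M (F t) (p t) x
        \<le> B + V * pstar - \<epsilon> * (\<Sum>k=1..K. \<bar>Q t k x\<bar>)" and n: "(0::nat) < n"
    have "V * ((\<Sum>t<n. p t x) / real n) + \<epsilon> * ((\<Sum>t<n. \<Sum>k=1..K. \<bar>Q t k x\<bar>) / real n)
       \<le> B + V * pstar + (Lq 0 x / real n + (\<Sum>t<n. X t x) / real n + V * ((\<Sum>t<n. Y t x) / real n))"
      by (rule telesc[where c="\<lambda>t. real_cond_exp M (F t) (dL t) x" and e="\<lambda>t. real_cond_exp M (F t) (p t) x"])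
         (use Lq0 d n in \<open>auto simp: X_def Y_def dL_def\<close>)
    then show "V * ((1 / real n) * (\<Sum>\<tau><n. p \<tau> x)) + \<epsilon> * ((1 / real n) * (\<Sum>\<tau><n. \<Sum>k=1..K. \<bar>Q \<tau> k x\<bar>))
       \<le> B + V * pstar + (Lq 0 x / real n + (\<Sum>t<n. X t x) / real n + V * ((\<Sum>t<n. Y t x) / real n))"
      by simp
  qed
  have rlim: "(\<lambda>n. Lq 0 x / real n + (\<Sum>t<n. X t x) / real n + V * ((\<Sum>t<n. Y t x) / real n)) \<longlonglongrightarrow> 0"
    if "(\<lambda>n. (\<Sum>k<n. X k x) / real n) \<longlonglongrightarrow> 0" "(\<lambda>n. (\<Sum>k<n. Y k x) / real n) \<longlonglongrightarrow> 0" for x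
  proof -
    have "(\<lambda>n. Lq 0 x / real n + (\<Sum>t<n. X t x) / real n + V * ((\<Sum>t<n. Y t x) / real n)) \<longlonglongrightarrow> 0 + 0 + V * 0"
      by (intro tendsto_intros that)
    then show ?thesis by simp
  qed
  show ?thesis
  proof (intro conjI impI)
    assume V: "V > 0"
    show "AE x in M. limsup (\<lambda>t. ereal ((1 / real t) * (\<Sum>\<tau><t. p \<tau> x))) \<le> ereal (pstar + B / V)"
      using main avX avY
    proof (eventually_elim)
      case (elim x)
      show ?case
        by (rule lim_a[OF V eps_nonneg _ _ rlim[OF elim(2,3)], where A="\<lambda>n. (1 / real n) * (\<Sum>\<tau><n. \<Sum>k=1..K. \<bar>Q \<tau> k x\<bar>)"])
           (use elim(1) in \<open>auto intro!: sum_nonneg divide_nonneg_nonneg\<close>)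
    qed
  next
    assume eps: "\<epsilon> > 0"
    show "AE x in M. limsup (\<lambda>t. ereal ((1 / real t) * (\<Sum>\<tau><t. \<Sum>k=1..K. \<bar>Q \<tau> k x\<bar>)))
              \<le> ereal (B / \<epsilon>) + ereal (V / \<epsilon>) *
                 limsup (\<lambda>t. ereal ((1 / real t) * (\<Sum>\<tau><t. pstar - p \<tau> x)))"
      using main avX avY
    proof (eventually_elim)
      case (elim x)
      show ?case
      proof (rule lim_b[OF eps V_nonneg _ _ rlim[OF elim(2,3)], where P="\<lambda>n. (1 / real n) * (\<Sum>\<tau><n. p \<tau> x)"])
        show "V * ((1 / real n) * (\<Sum>\<tau><n. p \<tau> x)) + \<epsilon> * ((1 / real n) * (\<Sum>\<tau><n. \<Sum>k=1..K. \<bar>Q \<tau> k x\<bar>))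
          \<le> B + V * pstar + (Lq 0 x / real n + (\<Sum>t<n. X t x) / real n + V * ((\<Sum>t<n. Y t x) / real n))"
          if "n > 0" for n using elim(1) that by blast
        show "(1 / real n) * (\<Sum>\<tau><n. pstar - p \<tau> x) = pstar - (1 / real n) * (\<Sum>\<tau><n. p \<tau> x)"
          if "n > 0" for n using that by (simp add: sum_subtractf field_simps)
      qed
    qed
  qed
qed

end
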